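(* Let $\lambda_1,\lambda_2\ge0$, let $\mathbf m\in\mathcal B(\lambda+\rho)_{res}$ be the head of its resonance family $RF(\mathbf m)$, with decoration $d=d(\mathbf m)>0$ and bounding data $s_2,s_5,s_6$. If $RF(\mathbf m)\cap\mathcal B(\lambda+\rho)=\emptyset$, then $d>\min\{s_2,s_5\}+s_6+2$.
   Context: For $\mathbf m\in\mathbb Z_{\ge0}^6$ and integers $\lambda_1,\lambda_2\ge0$: $s_1=\lambda_2+m_5+m_6-m_1-m_2-m_3$, $s_2=\lambda_2+m_5+m_6-m_2-2m_3$, $s_3=\lambda_2+m_6-m_3-m_4$, $s_4=\lambda_2+m_6-m_4-m_5$, $s_5=\lambda_2-m_5$, $s_6=\lambda_1-m_6$. $\mathcal B(\lambda+\rho)$: all $s_j\ge-1$ and $2s_3-s_4\ge-1$. $\mathcal B(\lambda+\rho)_{res}$: $m_3=m_5$, $s_j\ge-1$ for $j\in\{1,2,5,6\}$, $s_3=s_4\le0$ even; decoration $d(\mathbf m)=-s_3/2$. Weight $k(\mathbf m)=(m_2+3m_3+2m_4+3m_5+m_6,\ m_1+m_2+2m_3+m_4+m_5)$. Arrays $\left[\begin{smallmatrix}a&b&c&b&d\\&x&y&z&\\&&k&&\end{smallmatrix}\right]$ (entries in $\mathbb Z_{\ge0}$) with operators: $e_1$: $(a,c,d;y;k)\mapsto(a-1,c+1,d-1;y+1;k+1)$, zero if $\min\{a,d\}=0$; $e_2$: $(b,c;x,z;k)\mapsto(b-1,c+3;x+1,z+1;k+1)$, zero if $b=0$; $f_1$: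 $(a,c,d;y;k)\mapsto(a+1,c-1,d+1;y-1;k-1)$, zero if $\min\{c,y,k\}=0$; $f_2$: $(b,c;x,z;k)\mapsto(b+1,c-3;x-1,z-1;k-1)$, zero if $\min\{x,z,k\}=0$ or $c<3$ (unlisted entries unchanged; both copies of $b$ change together). $A(\mathbf m)=\left[\begin{smallmatrix}m_2&m_5&m_4&m_5&m_6\\&s_2+1&s_6+1&s_5+1&\\&&d(\mathbf m)&&\end{smallmatrix}\right]$. For an array $A$, $\epsilon_i(A)=\max\{n\ge0:e_i^n(A)\ne0\}$ and $\mathrm{hd}(A)=e_1^{\epsilon_1(A)}e_2^{\epsilon_2(A)}(A)$. On $\mathcal B(\lambda+\rho)_{res}$, $\mathbf m\sim\mathbf n$ iff $k(\mathbf m)=k(\mathbf n)$ and $\mathrm{hd}(A(\mathbf m))=\mathrm{hd}(A(\mathbf n))$; the class of $\mathbf m$ is its resonance family $RF(\mathbf m)$, whose head is the unique element $\mathbf n$ with $A(\mathbf n)=\mathrm{hd}(A(\mathbf n))$. *)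

theory Defs
  imports Main
begin

datatype mv = MV (m1: nat) (m2: nat) (m3: nat) (m4: nat) (m5: nat) (m6: nat)

definition s1 :: "nat \<Rightarrow> nat \<Rightarrow> mv \<Rightarrow> int" where
  "s1 l1 l2 m = int l2 + int (m5 m) + int (m6 m) - int (m1 m) - int (m2 m) - int (m3 m)"
definition s2 :: "nat \<Rightarrow> nat \<Rightarrow> mv \<Rightarrow> int" where
  "s2 l1 l2 m = int l2 + int (m5 m) + int (m6 m) - int (m2 m) - 2 * int (m3 m)"
definition s3 :: "nat \<Rightarrow> nat \<Rightarrow> mv \<Rightarrow> int" where
  "s3 l1 l2 m = int l2 + int (m6 m) - int (m3 m) - int (m4 m)"
definition s4 :: "nat \<Rightarrow> nat \<Rightarrow> mv \<Rightarrow> int" where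
  "s4 l1 l2 m = int l2 + int (m6 m) - int (m4 m) - int (m5 m)"
definition s5 :: "nat \<Rightarrow> nat \<Rightarrow> mv \<Rightarrow> int" where
  "s5 l1 l2 m = int l2 - int (m5 m)"
definition s6 :: "nat \<Rightarrow> nat \<Rightarrow> mv \<Rightarrow> int" where
  "s6 l1 l2 m = int l1 - int (m6 m)"

definition Bset :: "nat \<Rightarrow> nat \<Rightarrow> mv set" where
  "Bset l1 l2 = {m. s1 l1 l2 m \<ge> -1 \<and> s2 l1 l2 m \<ge> -1 \<and> s3 l1 l2 m \<ge> -1 \<and>
                    s4 l1 l2 m \<ge> -1 \<and> s5 l1 l2 m \<ge> -1 \<and> s6 l1 l2 m \<ge> -1 \<and>
                    2 * s3 l1 l2 m - s4 l1 l2 m \<ge> -1}"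

definition Bres :: "nat \<Rightarrow> nat \<Rightarrow> mv set" where
  "Bres l1 l2 = {m. m3 m = m5 m \<and> s1 l1 l2 m \<ge> -1 \<and> s2 l1 l2 m \<ge> -1 \<and>
                    s5 l1 l2 m \<ge> -1 \<and> s6 l1 l2 m \<ge> -1 \<and>
                    s3 l1 l2 m = s4 l1 l2 m \<and> s3 l1 l2 m \<le> 0 \<and> even (s3 l1 l2 m)}"

definition deco :: "nat \<Rightarrow> nat \<Rightarrow> mv \<Rightarrow> int" where
  "deco l1 l2 m = (- s3 l1 l2 m) div 2"

definition wt :: "mv \<Rightarrow> nat \<times> nat" where
  "wt m = (m2 m + 3 * m3 m + 2 * m4 m + 3 * m5 m + m6 m,
           m1 m + m2 m + 2 * m3 m + m4 m + m5 m)"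

section \<open>Arrays [a b c b d; x y z; k] and the operators\<close>

datatype arr = Arr (aa: int) (ab: int) (ac: int) (ad: int) (ax: int) (ay: int) (az: int) (ak: int)

definition e1 :: "arr \<Rightarrow> arr option" where
  "e1 A = (if min (aa A) (ad A) = 0 then None
           else Some (Arr (aa A - 1) (ab A) (ac A + 1) (ad A - 1) (ax A) (ay A + 1) (az A) (ak A + 1)))"

definition e2 :: "arr \<Rightarrow> arr option" where
  "e2 A = (if ab A = 0 then None
           else Some (Arr (aa A) (ab A - 1) (ac A + 3) (ad A) (ax A + 1) (ay A) (az A + 1) (ak A + 1)))"

definition f1 :: "arr \<Rightarrow> arr option" where
  "f1 A = (if min (min (ac A) (ay A)) (ak A) = 0 then None
           else Some (Arr (aa A + 1) (ab A) (ac A - 1) (ad A + 1) (ax A) (ay A - 1) (az A) (ak A - 1)))"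

definition f2 :: "arr \<Rightarrow> arr option" where
  "f2 A = (if min (min (ax A) (az A)) (ak A) = 0 \<or> ac A < 3 then None
           else Some (Arr (aa A) (ab A + 1) (ac A - 3) (ad A) (ax A - 1) (ay A) (az A - 1) (ak A - 1)))"

text \<open>n-fold iteration of a partial operator (None plays the role of 0).\<close>
fun opow :: "(arr \<Rightarrow> arr option) \<Rightarrow> nat \<Rightarrow> arr option \<Rightarrow> arr option" where
  "opow e 0 A = A"
| "opow e (Suc n) A = Option.bind (opow e n A) e"

definition eps :: "(arr \<Rightarrow> arr option) \<Rightarrow> arr \<Rightarrow> nat" where
  "eps e A = (GREATEST n. opow e n (Some A) \<noteq> None)"

definition hd_arr :: "arr \<Rightarrow> arr option" where
  "hd_arr A = opow e1 (eps e1 A) (opow e2 (eps e2 A) (Some A))"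

definition Aof :: "nat \<Rightarrow> nat \<Rightarrow> mv \<Rightarrow> arr" where
  "Aof l1 l2 m = Arr (int (m2 m)) (int (m5 m)) (int (m4 m)) (int (m6 m))
                     (s2 l1 l2 m + 1) (s6 l1 l2 m + 1) (s5 l1 l2 m + 1) (deco l1 l2 m)"

definition res_equiv :: "nat \<Rightarrow> nat \<Rightarrow> mv \<Rightarrow> mv \<Rightarrow> bool" where
  "res_equiv l1 l2 m n \<longleftrightarrow> m \<in> Bres l1 l2 \<and> n \<in> Bres l1 l2 \<and> wt m = wt n \<and>
      hd_arr (Aof l1 l2 m) = hd_arr (Aof l1 l2 n)"

definition RF :: "nat \<Rightarrow> nat \<Rightarrow> mv \<Rightarrow> mv set" where
  "RF l1 l2 m = {n. res_equiv l1 l2 m n}"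

definition is_head :: "nat \<Rightarrow> nat \<Rightarrow> mv \<Rightarrow> bool" where
  "is_head l1 l2 m \<longleftrightarrow> m \<in> Bres l1 l2 \<and> hd_arr (Aof l1 l2 m) = Some (Aof l1 l2 m)"

end

theory Submission imports Defs begin

lemma opow_e2:
  assumes "ab A \<ge> 0"
  shows "opow e2 n (Some A) = (if int n \<le> ab A then Some (Arr (aa A) (ab A - int n) (ac A + 3 * int n) (ad A)
     (ax A + int n) (ay A) (az A + int n) (ak A + int n)) else None)"
proof (induction n)
  case 0 then show ?case using assms by (cases A) auto
next
  case (Suc n) then show ?case by (cases "int n < ab A") (auto simp: e2_def)
qed

lemma opow_e1:
  assumes "aa A \<ge> 0" "ad A \<ge> 0"
  shows "opow e1 n (Some A) = (if int n \<le> min (aa A) (ad A) then Some (Arr (aa A - int n) (ab A) (ac A + int n) (ad A - int n)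
     (ax A) (ay A + int n) (az A) (ak A + int n)) else None)"
proof (induction n)
  case 0 then show ?case using assms by (cases A) auto
next
  case (Suc n) then show ?case by (cases "int n < min (aa A) (ad A)") (auto simp: e1_def)
qed

lemma eps_e2: assumes "ab A \<ge> 0" shows "eps e2 A = nat (ab A)"
  unfolding eps_def
  by (rule Greatest_equality) (use assms in \<open>auto simp: opow_e2 split: if_splits\<close>)

lemma eps_e1: assumes "aa A \<ge> 0" "ad A \<ge> 0" shows "eps e1 A = nat (min (aa A) (ad A))"
  unfolding eps_def
  by (rule Greatest_equality) (use assms in \<open>auto simp: opow_e1 split: if_splits\<close>)

lemma hd_form:
  assumes "aa A \<ge> 0" "ad A \<ge> 0" "ab A \<ge> 0"
  shows "hd_arr A = Some (Arr (aa A - min (aa A) (ad A)) 0 (ac A + 3 * ab A + min (aa A) (ad A))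
     (ad A - min (aa A) (ad A)) (ax A + ab A) (ay A + min (aa A) (ad A)) (az A + ab A) (ak A + ab A + min (aa A) (ad A)))"
  using assms unfolding hd_arr_def
  by (simp add: eps_e1 eps_e2 opow_e2 opow_e1)

theorem mainTheorem9:
  fixes l1 l2 :: nat and m :: mv
  assumes "m \<in> Bres l1 l2"
    and "is_head l1 l2 m"
    and "deco l1 l2 m > 0"
    and "RF l1 l2 m \<inter> Bset l1 l2 = {}"
  shows "deco l1 l2 m > min (s2 l1 l2 m) (s5 l1 l2 m) + s6 l1 l2 m + 2"
proof (rule ccontr)
  assume H: "\<not> ?thesis"
  have hd: "hd_arr (Aof l1 l2 m) = Some (Aof l1 l2 m)" using assms(2) by (simp add: is_head_def)
  hence "hd_arr (Aof l1 l2 m) = Some (Aof l1 l2 m)" .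
  with hd_form[of "Aof l1 l2 m"] have
    h5: "m5 m = 0" and hmin: "min (int (m2 m)) (int (m6 m)) = 0"
    by (auto simp: Aof_def)
  have B: "m3 m = m5 m" "s1 l1 l2 m \<ge> -1" "s2 l1 l2 m \<ge> -1" "s5 l1 l2 m \<ge> -1" "s6 l1 l2 m \<ge> -1"
    "s3 l1 l2 m = s4 l1 l2 m" "even (s3 l1 l2 m)"
    using assms(1) by (auto simp: Bres_def)
  define d where "d = deco l1 l2 m"
  have s3d: "s3 l1 l2 m = - 2 * d" using B(7) unfolding d_def deco_def by auto
  define b where "b = nat (min d (s6 l1 l2 m + 1))"
  define a where "a = nat d - b"
  have d0: "d > 0" using assms(3) d_def by simp
  have ab: "int a + int b = d" "int a \<le> min (s2 l1 l2 m) (s5 l1 l2 m) + 1"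
     "int b \<le> s6 l1 l2 m + 1"
    using H d0 B unfolding a_def b_def d_def[symmetric] by auto
  have m4: "int (m4 m) = int l2 + int (m6 m) + 2 * d"
    using s3d B(1) h5 by (simp add: s3_def)
  have m4ge: "m4 m \<ge> 3 * a + b" using m4 ab d0 H unfolding d_def[symmetric] a_def b_def
    by (auto simp: s6_def s5_def h5)
  define n where "n = MV (m1 m) (m2 m + b) a (m4 m - 3 * a - b) a (m6 m + b)"
  have sn: "s1 l1 l2 n = s1 l1 l2 m" "s2 l1 l2 n = s2 l1 l2 m - int a" "s3 l1 l2 n = 0"
     "s4 l1 l2 n = 0" "s5 l1 l2 n = s5 l1 l2 m - int a" "s6 l1 l2 n = s6 l1 l2 m - int b"
    using m4 m4ge h5 B(1) ab(1) unfolding n_def s1_def s2_def s3_def s4_def s5_def s6_def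
    by (auto simp: of_nat_diff)
  have nB: "n \<in> Bres l1 l2" using sn B ab by (auto simp: Bres_def n_def)
  have nB2: "n \<in> Bset l1 l2" using sn B ab by (auto simp: Bset_def)
  have wt: "wt m = wt n" using m4ge h5 B(1) by (auto simp: wt_def n_def)
  have dn: "deco l1 l2 n = 0" using sn by (simp add: deco_def)
  have "hd_arr (Aof l1 l2 n) = Some (Aof l1 l2 m)"
  proof -
    have "min (int (m2 m + b)) (int (m6 m + b)) = int b" using hmin by auto
    then show ?thesis
      using hd_form[of "Aof l1 l2 n"] sn dn m4ge h5 ab(1) d_def
      by (auto simp: Aof_def n_def of_nat_diff)
  qed
  hence "n \<in> RF l1 l2 m" using nB assms(1) wt hd by (simp add: RF_def res_equiv_def)
  with nB2 assms(4) show False by blast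
qed

end
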